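(* Let $X$ be a $C^*$-correspondence over $A$ with left action $\phi$, let $Y=X\oplus T$ over $B=A\oplus T$ be formed by adding the tail $T=(\ker\phi)^{(\mathbb N)}$, let $(\tilde\pi,\tilde t)$ be a representation of $Y$ that is coisometric on $J(Y)$, and let $C_X$ be the $C^*$-algebra generated by $\{\tilde\pi(a,\vec 0),\tilde t(\xi,\vec 0):a\in A,\xi\in X\}$. Then for every $n\ge0$, $\xi_i,\eta_i\in X$, $\vec f_i,\vec g_i,\vec h\in T$ and $a\in A$, the element $$\tilde t(\xi_1,\vec f_1)\cdots\tilde t(\xi_n,\vec f_n)\,\tilde\pi(a,\vec h)\,\tilde t(\eta_n,\vec g_n)^*\cdots\tilde t(\eta_1,\vec g_1)^*$$ equals $c+\tilde\pi(0,\vec k)$ for some $c\in C_X$ and some $\vec k\in T$.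
   Context: A $C^*$-correspondence over $A$ is a right Hilbert $A$-module $X$ with inner product $\langle\cdot,\cdot\rangle_A$ and a $*$-homomorphism $\phi:A\to\mathcal L(X)$; $\Theta_{\xi,\eta}(\zeta)=\xi\langle\eta,\zeta\rangle_A$, $\mathcal K(X)=\overline{\mathrm{span}}\{\Theta_{\xi,\eta}\}$, $J(Y):=\phi_B^{-1}(\mathcal K(Y))$. A representation of $Y$ over $B$ in a $C^*$-algebra $C$ is a pair $(\tilde\pi,\tilde t)$, $\tilde\pi:B\to C$ a $*$-homomorphism, $\tilde t:Y\to C$ linear, with $\tilde t(y)^*\tilde t(y')=\tilde\pi(\langle y,y'\rangle_B)$, $\tilde t(\phi_B(b)y)=\tilde\pi(b)\tilde t(y)$, $\tilde t(yb)=\tilde t(y)\tilde\pi(b)$; $\tilde\pi^{(1)}(\Theta_{y,y'})=\tilde t(y)\tilde t(y')^*$ defines $\tilde\pi^{(1)}$ on $\mathcal K(Y)$; coisometric on $J(Y)$ means $\tilde\pi^{(1)}(\phi_B(b))=\tilde\pi(b)$ for all $b\in J(Y)$. Adding the tail: $T:=(\ker\phi)^{(\mathbb N)}$ is the $c_0$-direct sum of copies of $\ker\phi$ (coordinatewise operations), a Hilbert module over itself with $\langle\vec f,\vec g\rangle=\vec f^*\vec g$; $B:=A\oplus T$, $Y:=X\oplus T$ with $(\xi,\vec f)(a,\vec g)=(\xi a,\vec f\vec g)$, $\langle(\xi,\vec f),(\nu,\vec g)\rangle_B=(\langle\xi,\nu\rangle_A,\vec f^*\vec g)$, $\phi_B(a,\vec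 f)(\xi,\vec g)=(\phi(a)\xi,(ag_1,f_1g_2,f_2g_3,\dots))$. *)

theory Defs
  imports "HOL-Analysis.Analysis"
begin

text \<open>A C*-algebra is modelled as a real Banach algebra type together with a complex
scalar multiplication sc (extending the real one) and an involution st, satisfying the
usual axioms including the C*-identity.\<close>

definition cstar_algebra ::
  "(complex \<Rightarrow> 'a::{real_normed_algebra,banach} \<Rightarrow> 'a) \<Rightarrow> ('a \<Rightarrow> 'a) \<Rightarrow> bool" where
  "cstar_algebra sc st \<longleftrightarrow>
     (\<forall>x. sc 1 x = x) \<and>
     (\<forall>c d x. sc (c * d) x = sc c (sc d x)) \<and>
     (\<forall>c d x. sc (c + d) x = sc c x + sc d x) \<and>
     (\<forall>c x y. sc c (x + y) = sc c x + sc c y) \<and>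
     (\<forall>r x. sc (complex_of_real r) x = scaleR r x) \<and>
     (\<forall>c x y. sc c (x * y) = sc c x * y \<and> sc c (x * y) = x * sc c y) \<and>
     (\<forall>c x. norm (sc c x) = cmod c * norm x) \<and>
     (\<forall>x y. st (x + y) = st x + st y) \<and>
     (\<forall>c x. st (sc c x) = sc (cnj c) (st x)) \<and>
     (\<forall>x y. st (x * y) = st y * st x) \<and>
     (\<forall>x. st (st x) = x) \<and>
     (\<forall>x. norm (st x * x) = (norm x)\<^sup>2)"

definition cpositive :: "('a::{real_normed_algebra} \<Rightarrow> 'a) \<Rightarrow> 'a \<Rightarrow> bool" where
  "cpositive st a \<longleftrightarrow> (\<exists>b. a = st b * b)"

definition hm_norm :: "('x \<Rightarrow> 'x \<Rightarrow> 'a::real_normed_algebra) \<Rightarrow> 'x \<Rightarrow> real" where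
  "hm_norm ip x = sqrt (norm (ip x x))"

text \<open>Right Hilbert A-module: X a complex vector space (scalar multiplication scX),
right A-action ract, A-valued inner product ip (linear in the second variable),
complete w.r.t. the norm sqrt(norm (ip x x)).\<close>

definition hilbert_module ::
  "(complex \<Rightarrow> 'a::{real_normed_algebra,banach} \<Rightarrow> 'a) \<Rightarrow> ('a \<Rightarrow> 'a) \<Rightarrow>
   (complex \<Rightarrow> 'x::ab_group_add \<Rightarrow> 'x) \<Rightarrow> ('x \<Rightarrow> 'a \<Rightarrow> 'x) \<Rightarrow> ('x \<Rightarrow> 'x \<Rightarrow> 'a) \<Rightarrow> bool" where
  "hilbert_module sc st scX ract ip \<longleftrightarrow>
     (\<forall>x. scX 1 x = x) \<and>
     (\<forall>c d x. scX (c * d) x = scX c (scX d x)) \<and>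
     (\<forall>c d x. scX (c + d) x = scX c x + scX d x) \<and>
     (\<forall>c x y. scX c (x + y) = scX c x + scX c y) \<and>
     (\<forall>x y a. ract (x + y) a = ract x a + ract y a) \<and>
     (\<forall>x a b. ract x (a + b) = ract x a + ract x b) \<and>
     (\<forall>x a b. ract (ract x a) b = ract x (a * b)) \<and>
     (\<forall>c x a. scX c (ract x a) = ract (scX c x) a \<and> ract x (sc c a) = scX c (ract x a)) \<and>
     (\<forall>x y z. ip x (y + z) = ip x y + ip x z) \<and>
     (\<forall>c x y. ip x (scX c y) = sc c (ip x y)) \<and>
     (\<forall>x y a. ip x (ract y a) = ip x y * a) \<and>
     (\<forall>x y. st (ip x y) = ip y x) \<and>
     (\<forall>x. cpositive st (ip x x)) \<and>
     (\<forall>x. ip x x = 0 \<longrightarrow> x = 0) \<and>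
     (\<forall>u :: nat \<Rightarrow> 'x.
        (\<forall>e>0. \<exists>N. \<forall>m\<ge>N. \<forall>n\<ge>N. hm_norm ip (u m - u n) < e) \<longrightarrow>
        (\<exists>x. (\<lambda>n. hm_norm ip (u n - x)) \<longlonglongrightarrow> 0))"

text \<open>C*-correspondence: Hilbert module with a *-homomorphism phi from A into the
adjointable operators on X (the adjoint of phi a is phi (st a)).\<close>

definition cstar_correspondence ::
  "(complex \<Rightarrow> 'a::{real_normed_algebra,banach} \<Rightarrow> 'a) \<Rightarrow> ('a \<Rightarrow> 'a) \<Rightarrow>
   (complex \<Rightarrow> 'x::ab_group_add \<Rightarrow> 'x) \<Rightarrow> ('x \<Rightarrow> 'a \<Rightarrow> 'x) \<Rightarrow> ('x \<Rightarrow> 'x \<Rightarrow> 'a) \<Rightarrow>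
   ('a \<Rightarrow> 'x \<Rightarrow> 'x) \<Rightarrow> bool" where
  "cstar_correspondence sc st scX ract ip phi \<longleftrightarrow>
     cstar_algebra sc st \<and> hilbert_module sc st scX ract ip \<and>
     (\<forall>a x y. phi a (x + y) = phi a x + phi a y) \<and>
     (\<forall>a c x. phi a (scX c x) = scX c (phi a x)) \<and>
     (\<forall>a x b. phi a (ract x b) = ract (phi a x) b) \<and>
     (\<forall>a x y. ip (phi a x) y = ip x (phi (st a) y)) \<and>
     (\<forall>a b x. phi (a + b) x = phi a x + phi b x) \<and>
     (\<forall>c a x. phi (sc c a) x = scX c (phi a x)) \<and>
     (\<forall>a b x. phi (a * b) x = phi a (phi b x))"

definition kerphi :: "('a \<Rightarrow> 'x::zero \<Rightarrow> 'x) \<Rightarrow> 'a set" where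
  "kerphi phi = {a. \<forall>x. phi a x = 0}"

text \<open>T = c_0-direct sum of copies of ker phi, indexed by nat (index 0 = first copy).\<close>

definition tail :: "('a::real_normed_vector \<Rightarrow> 'x::zero \<Rightarrow> 'x) \<Rightarrow> (nat \<Rightarrow> 'a) set" where
  "tail phi = {f. (\<forall>n. f n \<in> kerphi phi) \<and> f \<longlonglongrightarrow> 0}"

definition Bcar :: "('a::real_normed_vector \<Rightarrow> 'x::zero \<Rightarrow> 'x) \<Rightarrow> ('a \<times> (nat \<Rightarrow> 'a)) set" where
  "Bcar phi = UNIV \<times> tail phi"

definition addB :: "'a::plus \<times> (nat \<Rightarrow> 'a) \<Rightarrow> 'a \<times> (nat \<Rightarrow> 'a) \<Rightarrow> 'a \<times> (nat \<Rightarrow> 'a)" where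
  "addB b b' = (fst b + fst b', \<lambda>n. snd b n + snd b' n)"

definition mulB :: "'a::times \<times> (nat \<Rightarrow> 'a) \<Rightarrow> 'a \<times> (nat \<Rightarrow> 'a) \<Rightarrow> 'a \<times> (nat \<Rightarrow> 'a)" where
  "mulB b b' = (fst b * fst b', \<lambda>n. snd b n * snd b' n)"

definition scB :: "(complex \<Rightarrow> 'a \<Rightarrow> 'a) \<Rightarrow> complex \<Rightarrow> 'a \<times> (nat \<Rightarrow> 'a) \<Rightarrow> 'a \<times> (nat \<Rightarrow> 'a)" where
  "scB sc c b = (sc c (fst b), \<lambda>n. sc c (snd b n))"

definition stB :: "('a \<Rightarrow> 'a) \<Rightarrow> 'a \<times> (nat \<Rightarrow> 'a) \<Rightarrow> 'a \<times> (nat \<Rightarrow> 'a)" where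
  "stB st b = (st (fst b), \<lambda>n. st (snd b n))"

definition normB :: "'a::real_normed_vector \<times> (nat \<Rightarrow> 'a) \<Rightarrow> real" where
  "normB b = max (norm (fst b)) (SUP n. norm (snd b n))"

definition Ycar :: "('a::real_normed_vector \<Rightarrow> 'x::zero \<Rightarrow> 'x) \<Rightarrow> ('x \<times> (nat \<Rightarrow> 'a)) set" where
  "Ycar phi = UNIV \<times> tail phi"

definition addY :: "'x::plus \<times> (nat \<Rightarrow> 'a::plus) \<Rightarrow> 'x \<times> (nat \<Rightarrow> 'a) \<Rightarrow> 'x \<times> (nat \<Rightarrow> 'a)" where
  "addY y y' = (fst y + fst y', \<lambda>n. snd y n + snd y' n)"

definition subY :: "'x::minus \<times> (nat \<Rightarrow> 'a::minus) \<Rightarrow> 'x \<times> (nat \<Rightarrow> 'a) \<Rightarrow> 'x \<times> (nat \<Rightarrow> 'a)" where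
  "subY y y' = (fst y - fst y', \<lambda>n. snd y n - snd y' n)"

definition sumY :: "nat \<Rightarrow> (nat \<Rightarrow> 'x::comm_monoid_add \<times> (nat \<Rightarrow> 'a::comm_monoid_add)) \<Rightarrow> 'x \<times> (nat \<Rightarrow> 'a)" where
  "sumY n u = ((\<Sum>i<n. fst (u i)), \<lambda>k. \<Sum>i<n. snd (u i) k)"

definition scY :: "(complex \<Rightarrow> 'a \<Rightarrow> 'a) \<Rightarrow> (complex \<Rightarrow> 'x \<Rightarrow> 'x) \<Rightarrow> complex \<Rightarrow> 'x \<times> (nat \<Rightarrow> 'a) \<Rightarrow> 'x \<times> (nat \<Rightarrow> 'a)" where
  "scY sc scX c y = (scX c (fst y), \<lambda>n. sc c (snd y n))"

definition ractY :: "('x \<Rightarrow> 'a::times \<Rightarrow> 'x) \<Rightarrow> 'x \<times> (nat \<Rightarrow> 'a) \<Rightarrow> 'a \<times> (nat \<Rightarrow> 'a) \<Rightarrow> 'x \<times> (nat \<Rightarrow> 'a)" where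
  "ractY ract y b = (ract (fst y) (fst b), \<lambda>n. snd y n * snd b n)"

definition ipY :: "('a::times \<Rightarrow> 'a) \<Rightarrow> ('x \<Rightarrow> 'x \<Rightarrow> 'a) \<Rightarrow> 'x \<times> (nat \<Rightarrow> 'a) \<Rightarrow> 'x \<times> (nat \<Rightarrow> 'a) \<Rightarrow> 'a \<times> (nat \<Rightarrow> 'a)" where
  "ipY st ip y y' = (ip (fst y) (fst y'), \<lambda>n. st (snd y n) * snd y' n)"

text \<open>Left action of B on Y:
  phi_B(a,f)(xi,g) = (phi(a) xi, (a g_1, f_1 g_2, f_2 g_3, ...)), written 0-based.\<close>

definition phiB :: "('a::times \<Rightarrow> 'x \<Rightarrow> 'x) \<Rightarrow> 'a \<times> (nat \<Rightarrow> 'a) \<Rightarrow> 'x \<times> (nat \<Rightarrow> 'a) \<Rightarrow> 'x \<times> (nat \<Rightarrow> 'a)" where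
  "phiB phi b y = (phi (fst b) (fst y),
                   \<lambda>n. if n = 0 then fst b * snd y 0 else snd b (n - 1) * snd y n)"

definition hnY :: "('a::real_normed_algebra \<Rightarrow> 'a) \<Rightarrow> ('x \<Rightarrow> 'x \<Rightarrow> 'a) \<Rightarrow> 'x \<times> (nat \<Rightarrow> 'a) \<Rightarrow> real" where
  "hnY st ip y = sqrt (normB (ipY st ip y y))"

definition ThetaY :: "('x \<Rightarrow> 'a::times \<Rightarrow> 'x) \<Rightarrow> ('a \<Rightarrow> 'a) \<Rightarrow> ('x \<Rightarrow> 'x \<Rightarrow> 'a) \<Rightarrow>
    'x \<times> (nat \<Rightarrow> 'a) \<Rightarrow> 'x \<times> (nat \<Rightarrow> 'a) \<Rightarrow> 'x \<times> (nat \<Rightarrow> 'a) \<Rightarrow> 'x \<times> (nat \<Rightarrow> 'a)" where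
  "ThetaY ract st ip y y' z = ractY ract y (ipY st ip y' z)"

text \<open>K(Y): operators on Y that are operator-norm limits of finite sums of Theta's.
  The sum Theta_{ys 0, ys' 0} + ... + Theta_{ys (n-1), ys' (n-1)} is within e of T in
  operator norm iff the stated inequality holds on Y.\<close>

definition finrank_approx ::
  "('a::{real_normed_algebra,banach} \<Rightarrow> 'x::ab_group_add \<Rightarrow> 'x) \<Rightarrow> ('x \<Rightarrow> 'a \<Rightarrow> 'x) \<Rightarrow> ('a \<Rightarrow> 'a) \<Rightarrow>
   ('x \<Rightarrow> 'x \<Rightarrow> 'a) \<Rightarrow> ('x \<times> (nat \<Rightarrow> 'a) \<Rightarrow> 'x \<times> (nat \<Rightarrow> 'a)) \<Rightarrow> real \<Rightarrow>
   nat \<Rightarrow> (nat \<Rightarrow> 'x \<times> (nat \<Rightarrow> 'a)) \<Rightarrow> (nat \<Rightarrow> 'x \<times> (nat \<Rightarrow> 'a)) \<Rightarrow> bool" where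
  "finrank_approx phi ract st ip T e n ys ys' \<longleftrightarrow>
     (\<forall>i<n. ys i \<in> Ycar phi \<and> ys' i \<in> Ycar phi) \<and>
     (\<forall>z\<in>Ycar phi. hnY st ip (subY (T z) (sumY n (\<lambda>i. ThetaY ract st ip (ys i) (ys' i) z)))
                     \<le> e * hnY st ip z)"

definition inKY ::
  "('a::{real_normed_algebra,banach} \<Rightarrow> 'x::ab_group_add \<Rightarrow> 'x) \<Rightarrow> ('x \<Rightarrow> 'a \<Rightarrow> 'x) \<Rightarrow> ('a \<Rightarrow> 'a) \<Rightarrow>
   ('x \<Rightarrow> 'x \<Rightarrow> 'a) \<Rightarrow> ('x \<times> (nat \<Rightarrow> 'a) \<Rightarrow> 'x \<times> (nat \<Rightarrow> 'a)) \<Rightarrow> bool" where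
  "inKY phi ract st ip T \<longleftrightarrow> (\<forall>e>0. \<exists>n ys ys'. finrank_approx phi ract st ip T e n ys ys')"

definition JY ::
  "('a::{real_normed_algebra,banach} \<Rightarrow> 'x::ab_group_add \<Rightarrow> 'x) \<Rightarrow> ('x \<Rightarrow> 'a \<Rightarrow> 'x) \<Rightarrow> ('a \<Rightarrow> 'a) \<Rightarrow>
   ('x \<Rightarrow> 'x \<Rightarrow> 'a) \<Rightarrow> ('a \<times> (nat \<Rightarrow> 'a)) set" where
  "JY phi ract st ip = {b \<in> Bcar phi. inKY phi ract st ip (phiB phi b)}"

text \<open>pi1_is T c: the (continuous extension to K(Y) of the) map
  rho^(1)(Theta_{y,y'}) = t(y) t(y')^* takes the value c at T, i.e. T and c are
  simultaneously limits of finite sums of Theta_{y,y'} resp. t(y) t(y')^*.\<close>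

definition pi1_is ::
  "('a::{real_normed_algebra,banach} \<Rightarrow> 'x::ab_group_add \<Rightarrow> 'x) \<Rightarrow> ('x \<Rightarrow> 'a \<Rightarrow> 'x) \<Rightarrow> ('a \<Rightarrow> 'a) \<Rightarrow>
   ('x \<Rightarrow> 'x \<Rightarrow> 'a) \<Rightarrow> ('c::real_normed_algebra \<Rightarrow> 'c) \<Rightarrow> ('x \<times> (nat \<Rightarrow> 'a) \<Rightarrow> 'c) \<Rightarrow>
   ('x \<times> (nat \<Rightarrow> 'a) \<Rightarrow> 'x \<times> (nat \<Rightarrow> 'a)) \<Rightarrow> 'c \<Rightarrow> bool" where
  "pi1_is phi ract st ip stC t T c \<longleftrightarrow>
     (\<forall>e>0. \<exists>n ys ys'. finrank_approx phi ract st ip T e n ys ys' \<and>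
        norm (c - (\<Sum>i<n. t (ys i) * stC (t (ys' i)))) \<le> e)"

definition representationY ::
  "(complex \<Rightarrow> 'a::{real_normed_algebra,banach} \<Rightarrow> 'a) \<Rightarrow> ('a \<Rightarrow> 'a) \<Rightarrow>
   (complex \<Rightarrow> 'x::ab_group_add \<Rightarrow> 'x) \<Rightarrow> ('x \<Rightarrow> 'a \<Rightarrow> 'x) \<Rightarrow> ('x \<Rightarrow> 'x \<Rightarrow> 'a) \<Rightarrow>
   ('a \<Rightarrow> 'x \<Rightarrow> 'x) \<Rightarrow>
   (complex \<Rightarrow> 'c::{real_normed_algebra,banach} \<Rightarrow> 'c) \<Rightarrow> ('c \<Rightarrow> 'c) \<Rightarrow>
   ('a \<times> (nat \<Rightarrow> 'a) \<Rightarrow> 'c) \<Rightarrow> ('x \<times> (nat \<Rightarrow> 'a) \<Rightarrow> 'c) \<Rightarrow> bool" where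
  "representationY sc st scX ract ip phi scC stC rho t \<longleftrightarrow>
     (\<forall>b\<in>Bcar phi. \<forall>b'\<in>Bcar phi. rho (addB b b') = rho b + rho b' \<and> rho (mulB b b') = rho b * rho b') \<and>
     (\<forall>c. \<forall>b\<in>Bcar phi. rho (scB sc c b) = scC c (rho b)) \<and>
     (\<forall>b\<in>Bcar phi. rho (stB st b) = stC (rho b)) \<and>
     (\<forall>y\<in>Ycar phi. \<forall>y'\<in>Ycar phi. t (addY y y') = t y + t y') \<and>
     (\<forall>c. \<forall>y\<in>Ycar phi. t (scY sc scX c y) = scC c (t y)) \<and>
     (\<forall>y\<in>Ycar phi. \<forall>y'\<in>Ycar phi. stC (t y) * t y' = rho (ipY st ip y y')) \<and>
     (\<forall>b\<in>Bcar phi. \<forall>y\<in>Ycar phi. t (phiB phi b y) = rho b * t y) \<and>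
     (\<forall>b\<in>Bcar phi. \<forall>y\<in>Ycar phi. t (ractY ract y b) = t y * rho b)"

definition coisometric_on_JY ::
  "(complex \<Rightarrow> 'a::{real_normed_algebra,banach} \<Rightarrow> 'a) \<Rightarrow> ('a \<Rightarrow> 'a) \<Rightarrow>
   ('x::ab_group_add \<Rightarrow> 'a \<Rightarrow> 'x) \<Rightarrow> ('x \<Rightarrow> 'x \<Rightarrow> 'a) \<Rightarrow> ('a \<Rightarrow> 'x \<Rightarrow> 'x) \<Rightarrow>
   ('c::{real_normed_algebra,banach} \<Rightarrow> 'c) \<Rightarrow>
   ('a \<times> (nat \<Rightarrow> 'a) \<Rightarrow> 'c) \<Rightarrow> ('x \<times> (nat \<Rightarrow> 'a) \<Rightarrow> 'c) \<Rightarrow> bool" where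
  "coisometric_on_JY sc st ract ip phi stC rho t \<longleftrightarrow>
     (\<forall>b\<in>JY phi ract st ip. pi1_is phi ract st ip stC t (phiB phi b) (rho b))"

definition cstar_generated ::
  "(complex \<Rightarrow> 'c::{real_normed_algebra,banach} \<Rightarrow> 'c) \<Rightarrow> ('c \<Rightarrow> 'c) \<Rightarrow> 'c set \<Rightarrow> 'c set" where
  "cstar_generated scC stC S =
     \<Inter>{D. S \<subseteq> D \<and> closed D \<and> 0 \<in> D \<and>
          (\<forall>x\<in>D. \<forall>y\<in>D. x + y \<in> D \<and> x * y \<in> D) \<and>
          (\<forall>c. \<forall>x\<in>D. scC c x \<in> D) \<and> (\<forall>x\<in>D. stC x \<in> D)}"

text \<open>lprod n u x = u 0 * u 1 * ... * u (n-1) * x;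
      rprod n v x = x * v (n-1) * ... * v 1 * v 0.\<close>

fun lprod :: "nat \<Rightarrow> (nat \<Rightarrow> 'c::times) \<Rightarrow> 'c \<Rightarrow> 'c" where
  "lprod 0 u x = x"
| "lprod (Suc n) u x = lprod n u (u n * x)"

fun rprod :: "nat \<Rightarrow> (nat \<Rightarrow> 'c::times) \<Rightarrow> 'c \<Rightarrow> 'c" where
  "rprod 0 v x = x"
| "rprod (Suc n) v x = rprod n v (x * v n)"

end

theory Submission
  imports Defs
begin

locale TS =
  fixes sc :: "complex \<Rightarrow> 'a::{real_normed_algebra,banach} \<Rightarrow> 'a"
    and st :: "'a \<Rightarrow> 'a"
    and scX :: "complex \<Rightarrow> 'x::ab_group_add \<Rightarrow> 'x"
    and ract :: "'x \<Rightarrow> 'a \<Rightarrow> 'x"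
    and ip :: "'x \<Rightarrow> 'x \<Rightarrow> 'a"
    and phi :: "'a \<Rightarrow> 'x \<Rightarrow> 'x"
    and scC :: "complex \<Rightarrow> 'c::{real_normed_algebra,banach} \<Rightarrow> 'c"
    and stC :: "'c \<Rightarrow> 'c"
    and rho :: "'a \<times> (nat \<Rightarrow> 'a) \<Rightarrow> 'c"
    and t :: "'x \<times> (nat \<Rightarrow> 'a) \<Rightarrow> 'c"
  assumes corr: "cstar_correspondence sc st scX ract ip phi"
    and C: "cstar_algebra scC stC"
    and rep: "representationY sc st scX ract ip phi scC stC rho t"
    and cois: "coisometric_on_JY sc st ract ip phi stC rho t"
begin

lemma A: "cstar_algebra sc st" using corr unfolding cstar_correspondence_def by blast
lemma HM: "hilbert_module sc st scX ract ip" using corr unfolding cstar_correspondence_def by blast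

lemma st_add: "st (x + y) = st x + st y" using A unfolding cstar_algebra_def by blast
lemma st_mult: "st (x * y) = st y * st x" using A unfolding cstar_algebra_def by blast
lemma st_st[simp]: "st (st x) = x" using A unfolding cstar_algebra_def by blast
lemma st_cstar: "norm (st x * x) = (norm x)\<^sup>2" using A unfolding cstar_algebra_def by blast
lemma st_0[simp]: "st 0 = 0"
  using st_add[of 0 0] by simp

lemma norm_st_le: "norm x \<le> norm (st x)"
proof (cases "norm x = 0")
  case True then show ?thesis by simp
next
  case False
  have "(norm x)\<^sup>2 \<le> norm (st x) * norm x" using st_cstar[of x] norm_mult_ineq[of "st x" x] by simp
  then show ?thesis using False by (simp add: power2_eq_square)
qed
lemma norm_st[simp]: "norm (st x) = norm x"
  using norm_st_le[of x] norm_st_le[of "st x"] by simp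

lemma stC_add: "stC (x + y) = stC x + stC y" using C unfolding cstar_algebra_def by blast
lemma stC_mult: "stC (x * y) = stC y * stC x" using C unfolding cstar_algebra_def by blast
lemma stC_st[simp]: "stC (stC x) = x" using C unfolding cstar_algebra_def by blast
lemma stC_cstar: "norm (stC x * x) = (norm x)\<^sup>2" using C unfolding cstar_algebra_def by blast
lemma stC_0[simp]: "stC 0 = 0"
  using stC_add[of 0 0] by simp
lemma stC_minus: "stC (x - y) = stC x - stC y"
proof -
  have "stC (x - y) + stC y = stC x" using stC_add[of "x - y" y] by simp
  then show ?thesis by (simp add: algebra_simps eq_diff_eq)
qed
lemma scC_0[simp]: "scC c 0 = 0"
proof -
  have "scC c (0 + 0) = scC c 0 + scC c 0" using C unfolding cstar_algebra_def by blast
  then show ?thesis by simp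
qed
lemma scC_mult: "scC c (x * y) = scC c x * y" using C unfolding cstar_algebra_def by blast
lemma scC_mult2: "scC c (x * y) = x * scC c y" using C unfolding cstar_algebra_def by blast
lemma cstar_zero: "stC w * w = 0 \<Longrightarrow> w = 0"
  using stC_cstar[of w] by simp

lemma phi_add_x_all: "\<forall>a x y. phi a (x + y) = phi a x + phi a y" using corr unfolding cstar_correspondence_def by (elim conjE) assumption
lemma phi_add_x: "phi a (x + y) = phi a x + phi a y" using phi_add_x_all by blast
lemma phi_add_a_all: "\<forall>a b x. phi (a + b) x = phi a x + phi b x" using corr unfolding cstar_correspondence_def by (elim conjE) assumption
lemma phi_add_a: "phi (a + b) x = phi a x + phi b x" using phi_add_a_all by blast
lemma phi_mult_all: "\<forall>a b x. phi (a * b) x = phi a (phi b x)" using corr unfolding cstar_correspondence_def by (elim conjE) assumption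
lemma phi_mult: "phi (a * b) x = phi a (phi b x)" using phi_mult_all by blast
lemma phi_adj_all: "\<forall>a x y. ip (phi a x) y = ip x (phi (st a) y)" using corr unfolding cstar_correspondence_def by (elim conjE) assumption
lemma phi_adj: "ip (phi a x) y = ip x (phi (st a) y)" using phi_adj_all by blast
lemma phi_x0[simp]: "phi a 0 = 0" using phi_add_x[of a 0 0] by simp
lemma phi_0a[simp]: "phi 0 x = 0" using phi_add_a[of 0 0 x] by simp

lemma ract_add_x_all: "\<forall>x y a. ract (x + y) a = ract x a + ract y a" using HM unfolding hilbert_module_def by (elim conjE) assumption
lemma ract_add_x: "ract (x + y) a = ract x a + ract y a" using ract_add_x_all by blast
lemma ract_add_a_all: "\<forall>x a b. ract x (a + b) = ract x a + ract x b" using HM unfolding hilbert_module_def by (elim conjE) assumption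
lemma ract_add_a: "ract x (a + b) = ract x a + ract x b" using ract_add_a_all by blast
lemma ract_0x[simp]: "ract 0 a = 0" using ract_add_x[of 0 0 a] by simp
lemma ract_x0[simp]: "ract x 0 = 0" using ract_add_a[of x 0 0] by simp
lemma ip_add_all: "\<forall>x y z. ip x (y + z) = ip x y + ip x z" using HM unfolding hilbert_module_def by (elim conjE) assumption
lemma ip_add: "ip x (y + z) = ip x y + ip x z" using ip_add_all by blast
lemma ip_st_all: "\<forall>x y. st (ip x y) = ip y x" using HM unfolding hilbert_module_def by (elim conjE) assumption
lemma ip_st: "st (ip x y) = ip y x" using ip_st_all by blast
lemma ip_def0: "ip x x = 0 \<Longrightarrow> x = 0" using HM unfolding hilbert_module_def by blast
lemma ip_x0[simp]: "ip x 0 = 0" using ip_add[of x 0 0] by simp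
lemma ip_0x[simp]: "ip 0 x = 0" using ip_st[of x 0] by simp

lemma ker_0[simp]: "0 \<in> kerphi phi" unfolding kerphi_def by simp
lemma ker_multR: "p \<in> kerphi phi \<Longrightarrow> p * y \<in> kerphi phi" unfolding kerphi_def by (simp add: phi_mult)
lemma ker_multL: "p \<in> kerphi phi \<Longrightarrow> y * p \<in> kerphi phi" unfolding kerphi_def by (simp add: phi_mult)
lemma ker_st: assumes "p \<in> kerphi phi" shows "st p \<in> kerphi phi"
  unfolding kerphi_def
proof (intro CollectI allI)
  fix x
  have "ip (phi (st p) x) (phi (st p) x) = ip x (phi p (phi (st p) x))" using phi_adj[of "st p" x] by simp
  also have "\<dots> = 0" using assms unfolding kerphi_def by simp
  finally show "phi (st p) x = 0" by (rule ip_def0)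
qed

lemma tail_0[simp]: "(\<lambda>_. 0) \<in> tail phi" unfolding tail_def by simp
lemma tail_mult: assumes "p \<in> tail phi" "k \<in> tail phi" shows "(\<lambda>n. p n * k n) \<in> tail phi"
  using assms unfolding tail_def by (auto intro: ker_multR dest: tendsto_mult)
lemma tail_st: assumes "p \<in> tail phi" shows "(\<lambda>n. st (p n)) \<in> tail phi"
proof -
  have "(\<lambda>n. norm (st (p n))) \<longlonglongrightarrow> 0" using assms unfolding tail_def
    by (simp add: tendsto_norm_zero_iff)
  then have "(\<lambda>n. st (p n)) \<longlonglongrightarrow> 0" by (rule tendsto_norm_zero_cancel)
  then show ?thesis using assms unfolding tail_def by (auto intro: ker_st)
qed
lemma tail_Suc: assumes "p \<in> tail phi" shows "(\<lambda>n. p (Suc n)) \<in> tail phi"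
  using assms unfolding tail_def by (auto simp: LIMSEQ_Suc)

lemma Bcar_iff[simp]: "(a, k) \<in> Bcar phi \<longleftrightarrow> k \<in> tail phi" unfolding Bcar_def by simp
lemma Ycar_iff[simp]: "(x, k) \<in> Ycar phi \<longleftrightarrow> k \<in> tail phi" unfolding Ycar_def by simp

lemma rho_add: "b \<in> Bcar phi \<Longrightarrow> b' \<in> Bcar phi \<Longrightarrow> rho (addB b b') = rho b + rho b'"
  using rep unfolding representationY_def by blast
lemma rho_mult: "b \<in> Bcar phi \<Longrightarrow> b' \<in> Bcar phi \<Longrightarrow> rho (mulB b b') = rho b * rho b'"
  using rep unfolding representationY_def by blast
lemma rho_st: "b \<in> Bcar phi \<Longrightarrow> rho (stB st b) = stC (rho b)"
  using rep unfolding representationY_def by blast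
lemma t_add: "y \<in> Ycar phi \<Longrightarrow> y' \<in> Ycar phi \<Longrightarrow> t (addY y y') = t y + t y'"
  using rep unfolding representationY_def by blast
lemma t_ip: "y \<in> Ycar phi \<Longrightarrow> y' \<in> Ycar phi \<Longrightarrow> stC (t y) * t y' = rho (ipY st ip y y')"
  using rep unfolding representationY_def by blast
lemma t_phi: "b \<in> Bcar phi \<Longrightarrow> y \<in> Ycar phi \<Longrightarrow> t (phiB phi b y) = rho b * t y"
  using rep unfolding representationY_def by blast
lemma t_ract: "b \<in> Bcar phi \<Longrightarrow> y \<in> Ycar phi \<Longrightarrow> t (ractY ract y b) = t y * rho b"
  using rep unfolding representationY_def by blast

lemma rho0[simp]: "rho (0, \<lambda>_. 0) = 0"
proof -
  have "rho (addB (0, \<lambda>_. 0) (0, \<lambda>_. 0)) = rho (0, \<lambda>_. 0) + rho (0, \<lambda>_. 0)"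
    by (rule rho_add) auto
  then show ?thesis by (simp add: addB_def)
qed
lemma t0[simp]: "t (0, \<lambda>_. 0) = 0"
proof -
  have "t (addY (0, \<lambda>_. 0) (0, \<lambda>_. 0)) = t (0, \<lambda>_. 0) + t (0, \<lambda>_. 0)"
    by (rule t_add) auto
  then show ?thesis by (simp add: addY_def)
qed

lemma L1: "k \<in> tail phi \<Longrightarrow> t (x, k) = t (x, \<lambda>_. 0) + t (0, k)"
  using t_add[of "(x, \<lambda>_. 0)" "(0, k)"] by (simp add: addY_def)
lemma L2: "k \<in> tail phi \<Longrightarrow> rho (a, k) = rho (a, \<lambda>_. 0) + rho (0, k)"
  using rho_add[of "(a, \<lambda>_. 0)" "(0, k)"] by (simp add: addB_def)
lemma L3: "g \<in> tail phi \<Longrightarrow> t (0, g) * rho (a, \<lambda>_. 0) = 0"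
  using t_ract[of "(a, \<lambda>_. 0)" "(0, g)"] by (simp add: ractY_def)
lemma L4: "k \<in> tail phi \<Longrightarrow> t (x, \<lambda>_. 0) * rho (0, k) = 0"
  using t_ract[of "(0, k)" "(x, \<lambda>_. 0)"] by (simp add: ractY_def)
lemma L5: "p \<in> tail phi \<Longrightarrow> k \<in> tail phi \<Longrightarrow> t (0, p) * rho (0, k) = t (0, \<lambda>n. p n * k n)"
  using t_ract[of "(0, k)" "(0, p)"] by (simp add: ractY_def)
lemma L6: assumes g: "g \<in> tail phi" shows "t (0, g) * t (x, \<lambda>_. 0) = 0"
proof (rule cstar_zero)
  let ?B = "ipY st ip (0, g) (0, g)"
  have B: "?B \<in> Bcar phi" using g by (simp add: ipY_def tail_mult tail_st)
  have h1: "stC (t (0, g) * t (x, \<lambda>_. 0)) * (t (0, g) * t (x, \<lambda>_. 0))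
      = stC (t (x, \<lambda>_. 0)) * ((stC (t (0, g)) * t (0, g)) * t (x, \<lambda>_. 0))"
    by (simp add: stC_mult mult.assoc)
  have h2: "stC (t (0, g)) * t (0, g) = rho ?B" using g by (simp add: t_ip)
  have h3: "rho ?B * t (x, \<lambda>_. 0) = t (phiB phi ?B (x, \<lambda>_. 0))" using B by (simp add: t_phi)
  have h4: "phiB phi ?B (x, \<lambda>_. 0) = (0, \<lambda>_. 0)" unfolding phiB_def ipY_def by (simp add: fun_eq_iff)
  show "stC (t (0, g) * t (x, \<lambda>_. 0)) * (t (0, g) * t (x, \<lambda>_. 0)) = 0"
    unfolding h1 h2 h3 h4 by simp
qed
lemma L7: assumes g: "g \<in> tail phi" shows "t (x, \<lambda>_. 0) * stC (t (0, g)) = 0"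
proof (rule cstar_zero)
  have "stC (t (x, \<lambda>_. 0) * stC (t (0, g))) * (t (x, \<lambda>_. 0) * stC (t (0, g)))
      = t (0, g) * (stC (t (x, \<lambda>_. 0)) * t (x, \<lambda>_. 0)) * stC (t (0, g))"
    by (simp add: stC_mult mult.assoc)
  also have "stC (t (x, \<lambda>_. 0)) * t (x, \<lambda>_. 0) = rho (ip x x, \<lambda>_. 0)"
    using t_ip[of "(x, \<lambda>_. 0)" "(x, \<lambda>_. 0)"] by (simp add: ipY_def)
  also have "t (0, g) * rho (ip x x, \<lambda>_. 0) = 0" using g by (rule L3)
  finally show "stC (t (x, \<lambda>_. 0) * stC (t (0, g))) * (t (x, \<lambda>_. 0) * stC (t (0, g))) = 0" by simp
qed
lemma L8: assumes g: "g \<in> tail phi" shows "rho (a, \<lambda>_. 0) * stC (t (0, g)) = 0"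
proof -
  have "stC (rho (st a, \<lambda>_. 0)) = rho (a, \<lambda>_. 0)"
    using rho_st[of "(st a, \<lambda>_. 0)"] by (simp add: stB_def)
  then have "rho (a, \<lambda>_. 0) * stC (t (0, g)) = stC (t (0, g) * rho (st a, \<lambda>_. 0))"
    by (simp add: stC_mult)
  also have "\<dots> = 0" using g by (simp add: L3)
  finally show ?thesis .
qed

definition bb :: "(nat \<Rightarrow> 'a) \<Rightarrow> (nat \<Rightarrow> 'a) \<Rightarrow> 'a \<times> (nat \<Rightarrow> 'a)" where
  "bb p q = (p 0 * st (q 0), \<lambda>n. p (Suc n) * st (q (Suc n)))"

lemma bb_B: "p \<in> tail phi \<Longrightarrow> q \<in> tail phi \<Longrightarrow> bb p q \<in> Bcar phi"
  unfolding bb_def by (simp add: tail_mult tail_st tail_Suc)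
lemma bb_st: "stB st (bb p q) = bb q p"
  unfolding bb_def stB_def by (simp add: st_mult)
lemma bb_phi: assumes p: "p \<in> tail phi"
  shows "phiB phi (bb p q) y = ractY ract (0, p) (ipY st ip (0, q) y)"
proof -
  have "p 0 \<in> kerphi phi" using p unfolding tail_def by simp
  then have "phi (p 0 * st (q 0)) (fst y) = 0" unfolding kerphi_def by (simp add: phi_mult)
  then show ?thesis unfolding bb_def phiB_def ractY_def ipY_def
    by (auto simp: mult.assoc)
qed
lemma bb_JY: assumes p: "p \<in> tail phi" and q: "q \<in> tail phi" shows "bb p q \<in> JY phi ract st ip"
  unfolding JY_def inKY_def
proof (intro CollectI conjI bb_B p q allI impI)
  fix e :: real assume e: "e > 0"
  show "\<exists>n ys ys'. finrank_approx phi ract st ip (phiB phi (bb p q)) e n ys ys'"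
  proof (intro exI)
    show "finrank_approx phi ract st ip (phiB phi (bb p q)) e 1 (\<lambda>_. (0, p)) (\<lambda>_. (0, q))"
      unfolding finrank_approx_def
    proof (intro conjI ballI allI impI)
      fix z :: "'x \<times> (nat \<Rightarrow> 'a)" assume "z \<in> Ycar phi"
      have "subY (phiB phi (bb p q) z) (sumY 1 (\<lambda>i. ThetaY ract st ip (0, p) (0, q) z)) = (0, \<lambda>_. 0)"
        by (simp add: bb_phi[OF p] ThetaY_def sumY_def subY_def)
      moreover have "hnY st ip (0, \<lambda>_. 0) = 0" by (simp add: hnY_def ipY_def normB_def)
      moreover have "hnY st ip z \<ge> 0" unfolding hnY_def normB_def by (auto simp: le_max_iff_disj)
      ultimately show "hnY st ip (subY (phiB phi (bb p q) z) (sumY 1 (\<lambda>i. ThetaY ract st ip (0, p) (0, q) z))) \<le> e * hnY st ip z"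
        using e by simp
    qed (use p q in auto)
  qed
qed

lemma bb_ann: assumes p: "p \<in> tail phi" and q: "q \<in> tail phi" and y: "y \<in> Ycar phi"
  shows "(t (0, p) * stC (t (0, q)) - rho (bb p q)) * t y = 0"
proof -
  have B: "ipY st ip (0, q) y \<in> Bcar phi"
    using y q unfolding Ycar_def by (cases y) (simp add: ipY_def tail_mult tail_st)
  have "t (0, p) * stC (t (0, q)) * t y = t (0, p) * rho (ipY st ip (0, q) y)"
    using y q by (simp add: t_ip mult.assoc)
  also have "\<dots> = t (ractY ract (0, p) (ipY st ip (0, q) y))" using B p by (simp add: t_ract)
  also have "\<dots> = t (phiB phi (bb p q) y)" by (simp add: bb_phi[OF p])
  also have "\<dots> = rho (bb p q) * t y" using bb_B[OF p q] y by (simp add: t_phi)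
  finally show ?thesis by (simp add: algebra_simps)
qed

lemma bb_eq: assumes p: "p \<in> tail phi" and q: "q \<in> tail phi"
  shows "t (0, p) * stC (t (0, q)) = rho (bb p q)"
proof -
  define D where "D = t (0, p) * stC (t (0, q)) - rho (bb p q)"
  define D' where "D' = t (0, q) * stC (t (0, p)) - rho (bb q p)"
  have stD: "stC D = D'" unfolding D_def D'_def
    by (simp add: stC_minus stC_mult rho_st[OF bb_B[OF p q], symmetric] bb_st)
  have pi: "pi1_is phi ract st ip stC t (phiB phi (bb p q)) (rho (bb p q))"
    using cois bb_JY[OF p q] unfolding coisometric_on_JY_def by blast
  have "(norm D)\<^sup>2 \<le> 0 + e" if e: "e > 0" for e
  proof -
    define e0 where "e0 = e / (norm D' + 1)"
    have e0: "e0 > 0" using e norm_ge_zero[of D'] unfolding e0_def by (intro divide_pos_pos) linarith+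
    obtain m ys ys' where fr: "finrank_approx phi ract st ip (phiB phi (bb p q)) e0 m ys ys'"
      and nrm: "norm (rho (bb p q) - (\<Sum>i<m. t (ys i) * stC (t (ys' i)))) \<le> e0"
      using pi e0 unfolding pi1_is_def by blast
    define S where "S = (\<Sum>i<m. t (ys i) * stC (t (ys' i)))"
    have ys: "\<And>i. i < m \<Longrightarrow> ys i \<in> Ycar phi" using fr unfolding finrank_approx_def by blast
    have "D' * S = (\<Sum>i<m. (D' * t (ys i)) * stC (t (ys' i)))"
      unfolding S_def by (simp add: sum_distrib_left mult.assoc)
    also have "\<dots> = 0"
      using bb_ann[OF q p ys] unfolding D'_def by (intro sum.neutral) auto
    finally have DS: "D' * S = 0" .
    have DX: "D' * (t (0, p) * stC (t (0, q))) = 0"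
      using bb_ann[OF q p, of "(0, p)"] p unfolding D'_def by (simp add: mult.assoc[symmetric])
    have "stC D * D = D' * (t (0, p) * stC (t (0, q))) - D' * S + D' * (S - rho (bb p q))"
      unfolding stD unfolding D_def by (simp add: algebra_simps)
    also have "\<dots> = D' * (S - rho (bb p q))" using DS DX by simp
    finally have "(norm D)\<^sup>2 = norm (D' * (S - rho (bb p q)))" using stC_cstar[of D] by simp
    also have "\<dots> \<le> norm D' * norm (S - rho (bb p q))" by (rule norm_mult_ineq)
    also have "\<dots> \<le> norm D' * e0"
      using nrm unfolding S_def by (intro mult_left_mono) (auto simp: norm_minus_commute)
    also have "\<dots> \<le> e"
    proof -
      have "norm D' * e0 = e * (norm D' / (norm D' + 1))" unfolding e0_def by simp
      also have "\<dots> \<le> e * 1"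
      proof (intro mult_left_mono)
        have pos: "norm D' + 1 > 0" using norm_ge_zero[of D'] by linarith
        then show "norm D' / (norm D' + 1) \<le> 1" by (simp add: divide_le_eq_1)
      qed (use e in auto)
      finally show ?thesis by simp
    qed
    finally show ?thesis by simp
  qed
  then have "(norm D)\<^sup>2 \<le> 0" by (rule field_le_epsilon)
  then have "D = 0" by simp
  then show ?thesis unfolding D_def by simp
qed

lemma bb_split: assumes p: "p \<in> tail phi" and q: "q \<in> tail phi"
  shows "t (0, p) * stC (t (0, q)) = rho (p 0 * st (q 0), \<lambda>_. 0) + rho (0, \<lambda>n. p (Suc n) * st (q (Suc n)))"
  unfolding bb_eq[OF p q] bb_def
  by (rule L2) (simp add: tail_mult tail_st tail_Suc p q)


definition CX where
  "CX = cstar_generated scC stC ({rho (a', \<lambda>_. 0) | a'. True} \<union> {t (x, \<lambda>_. 0) | x. True})"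

lemma CX_rho: "rho (a, \<lambda>_. 0) \<in> CX" unfolding CX_def cstar_generated_def by blast
lemma CX_t: "t (x, \<lambda>_. 0) \<in> CX" unfolding CX_def cstar_generated_def by blast
lemma CX_add: "c \<in> CX \<Longrightarrow> d \<in> CX \<Longrightarrow> c + d \<in> CX" unfolding CX_def cstar_generated_def by blast
lemma CX_mult: "c \<in> CX \<Longrightarrow> d \<in> CX \<Longrightarrow> c * d \<in> CX" unfolding CX_def cstar_generated_def by blast
lemma CX_st: "c \<in> CX \<Longrightarrow> stC c \<in> CX" unfolding CX_def cstar_generated_def by blast

definition W where
  "W = {c. \<forall>g\<in>tail phi. c * stC (t (0, g)) = 0 \<and> t (0, g) * c = 0}"

lemma W_closed: "closed W"
proof -
  have "W = (\<Inter>g\<in>tail phi. {c. c * stC (t (0, g)) = 0} \<inter> {c. t (0, g) * c = 0})"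
    unfolding W_def by auto
  moreover have "closed {c. c * w = 0}" for w :: 'c
    by (intro closed_Collect_eq continuous_intros)
  moreover have "closed {c. w * c = 0}" for w :: 'c
    by (intro closed_Collect_eq continuous_intros)
  ultimately show ?thesis by (auto intro!: closed_INT closed_Int)
qed

lemma CX_W: "CX \<subseteq> W"
  unfolding CX_def cstar_generated_def
proof (rule Inter_lower, intro CollectI conjI ballI allI)
  show "{rho (a', \<lambda>_. 0) |a'. True} \<union> {t (x, \<lambda>_. 0) |x. True} \<subseteq> W"
    unfolding W_def by (auto simp: L3 L6 L7 L8)
  show "closed W" by (rule W_closed)
  show "0 \<in> W" unfolding W_def by simp
next
  fix x y assume "x \<in> W" "y \<in> W"
  then show "x + y \<in> W" "x * y \<in> W" unfolding W_def
    by (auto simp: algebra_simps mult.assoc[symmetric])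
next
  fix c x assume "x \<in> W"
  then show "scC c x \<in> W" unfolding W_def
    by (simp add: scC_mult[symmetric] scC_mult2[symmetric])
next
  fix x assume x: "x \<in> W"
  show "stC x \<in> W" unfolding W_def
  proof (intro CollectI ballI conjI)
    fix g assume g: "g \<in> tail phi"
    have "stC x * stC (t (0, g)) = stC (t (0, g) * x)" by (simp add: stC_mult)
    then show "stC x * stC (t (0, g)) = 0" using x g unfolding W_def by simp
    have "t (0, g) * stC x = stC (x * stC (t (0, g)))" by (simp add: stC_mult)
    then show "t (0, g) * stC x = 0" using x g unfolding W_def by simp
  qed
qed

lemma CX_annR: "c \<in> CX \<Longrightarrow> g \<in> tail phi \<Longrightarrow> c * stC (t (0, g)) = 0"
  using CX_W unfolding W_def by blast
lemma CX_annL: "c \<in> CX \<Longrightarrow> g \<in> tail phi \<Longrightarrow> t (0, g) * c = 0"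
  using CX_W unfolding W_def by blast

lemma step:
  assumes c: "c \<in> CX" and k: "k \<in> tail phi" and f: "f \<in> tail phi" and g: "g \<in> tail phi"
  shows "\<exists>c'\<in>CX. \<exists>k'\<in>tail phi. t (x, f) * (c + rho (0, k)) * stC (t (y, g)) = c' + rho (0, k')"
proof -
  define A where "A = t (x, \<lambda>_. 0)"
  define F where "F = t (0, f)"
  define E where "E = stC (t (y, \<lambda>_. 0))"
  define G where "G = stC (t (0, g))"
  define R where "R = rho (0, k)"
  define fk where "fk = (\<lambda>n. f n * k n)"
  have fk: "fk \<in> tail phi" unfolding fk_def using f k by (rule tail_mult)
  have tf: "t (x, f) = A + F" unfolding A_def F_def using f by (rule L1)
  have tg: "stC (t (y, g)) = E + G" unfolding E_def G_def using L1[OF g, of y] by (simp add: stC_add)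
  have cG: "c * G = 0" unfolding G_def using c g by (rule CX_annR)
  have Fc: "F * c = 0" unfolding F_def using c f by (rule CX_annL)
  have AR: "A * R = 0" unfolding A_def R_def using k by (rule L4)
  have FR: "F * R = t (0, fk)" unfolding F_def R_def fk_def using f k by (rule L5)
  have FRE: "t (0, fk) * E = 0"
  proof -
    have "t (0, fk) * E = stC (t (y, \<lambda>_. 0) * stC (t (0, fk)))" unfolding E_def by (simp add: stC_mult)
    also have "\<dots> = 0" using L7[OF fk] by simp
    finally show ?thesis .
  qed
  have FRG: "t (0, fk) * G = rho (fk 0 * st (g 0), \<lambda>_. 0) + rho (0, \<lambda>n. fk (Suc n) * st (g (Suc n)))"
    unfolding G_def by (rule bb_split[OF fk g])
  have "t (x, f) * (c + rho (0, k)) * stC (t (y, g)) = (A + F) * (c + R) * (E + G)"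
    unfolding tf tg R_def ..
  also have "\<dots> = A * c * E + A * (c * G) + (A * R) * E + (A * R) * G + (F * c) * E + (F * c) * G
      + (F * R) * E + (F * R) * G"
    by (simp add: algebra_simps)
  also have "\<dots> = (A * c * E + rho (fk 0 * st (g 0), \<lambda>_. 0)) + rho (0, \<lambda>n. fk (Suc n) * st (g (Suc n)))"
    unfolding cG Fc AR FR FRE FRG by (simp add: add.assoc)
  finally have eq: "t (x, f) * (c + rho (0, k)) * stC (t (y, g)) = (A * c * E + rho (fk 0 * st (g 0), \<lambda>_. 0)) + rho (0, \<lambda>n. fk (Suc n) * st (g (Suc n)))" .
  have "A * c * E + rho (fk 0 * st (g 0), \<lambda>_. 0) \<in> CX"
    unfolding A_def E_def by (intro CX_add CX_mult CX_st CX_t CX_rho c)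
  moreover have "(\<lambda>n. fk (Suc n) * st (g (Suc n))) \<in> tail phi"
    using tail_mult[OF tail_Suc[OF fk] tail_st[OF tail_Suc[OF g]]] by simp
  ultimately show ?thesis using eq by blast
qed

lemma lprod_mult: "lprod n (U :: nat \<Rightarrow> 'c) y * w = lprod n U (y * w)"
  by (induction n arbitrary: y) (simp_all add: mult.assoc)

lemma main_gen:
  assumes "\<forall>i<n. f i \<in> tail phi" and "\<forall>i<n. g i \<in> tail phi"
    and "\<exists>c\<in>CX. \<exists>k\<in>tail phi. z = c + rho (0, k)"
  shows "\<exists>c\<in>CX. \<exists>k\<in>tail phi.
    rprod n (\<lambda>i. stC (t (eta i, g i))) (lprod n (\<lambda>i. t (xi i, f i)) z) = c + rho (0, k)"
  using assms
proof (induction n arbitrary: z)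
  case 0
  then show ?case by simp
next
  case (Suc n)
  let ?U = "\<lambda>i. t (xi i, f i)" and ?V = "\<lambda>i. stC (t (eta i, g i))"
  have eq: "rprod (Suc n) ?V (lprod (Suc n) ?U z) = rprod n ?V (lprod n ?U (?U n * z * ?V n))"
    by (simp add: lprod_mult)
  from Suc.prems(3) obtain c k where c: "c \<in> CX" and k: "k \<in> tail phi" and z: "z = c + rho (0, k)" by blast
  have "\<exists>c\<in>CX. \<exists>k\<in>tail phi. ?U n * z * ?V n = c + rho (0, k)"
    unfolding z using step[OF c k] Suc.prems(1,2) by simp
  then show ?case unfolding eq using Suc.IH Suc.prems(1,2) by simp
qed

end

theorem mainTheorem9:
  fixes sc :: "complex \<Rightarrow> 'a::{real_normed_algebra,banach} \<Rightarrow> 'a"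
    and st :: "'a \<Rightarrow> 'a"
    and scX :: "complex \<Rightarrow> 'x::ab_group_add \<Rightarrow> 'x"
    and ract :: "'x \<Rightarrow> 'a \<Rightarrow> 'x"
    and ip :: "'x \<Rightarrow> 'x \<Rightarrow> 'a"
    and phi :: "'a \<Rightarrow> 'x \<Rightarrow> 'x"
    and scC :: "complex \<Rightarrow> 'c::{real_normed_algebra,banach} \<Rightarrow> 'c"
    and stC :: "'c \<Rightarrow> 'c"
    and rho :: "'a \<times> (nat \<Rightarrow> 'a) \<Rightarrow> 'c"
    and t :: "'x \<times> (nat \<Rightarrow> 'a) \<Rightarrow> 'c"
    and n :: nat
    and xi eta :: "nat \<Rightarrow> 'x"
    and f g :: "nat \<Rightarrow> nat \<Rightarrow> 'a"
    and h :: "nat \<Rightarrow> 'a"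
    and a :: 'a
  assumes corr: "cstar_correspondence sc st scX ract ip phi"
    and C: "cstar_algebra scC stC"
    and rep: "representationY sc st scX ract ip phi scC stC rho t"
    and cois: "coisometric_on_JY sc st ract ip phi stC rho t"
    and f_tail: "\<forall>i<n. f i \<in> tail phi"
    and g_tail: "\<forall>i<n. g i \<in> tail phi"
    and h_tail: "h \<in> tail phi"
  shows "\<exists>c \<in> cstar_generated scC stC
                 ({rho (a', \<lambda>_. 0) | a'. True} \<union> {t (x, \<lambda>_. 0) | x. True}).
         \<exists>k \<in> tail phi.
           rprod n (\<lambda>i. stC (t (eta i, g i))) (lprod n (\<lambda>i. t (xi i, f i)) (rho (a, h)))
             = c + rho (0, k)"
proof -
  interpret TS sc st scX ract ip phi scC stC rho t
    using corr C rep cois by unfold_locales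
  have "\<exists>c\<in>CX. \<exists>k\<in>tail phi. rho (a, h) = c + rho (0, k)"
    using L2[OF h_tail, of a] CX_rho h_tail by blast
  from main_gen[OF f_tail g_tail this] show ?thesis unfolding CX_def .
qed

end
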